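(* Consider the Unbiased Space Saving sketch with $m$ bins run on an arbitrary (deterministic) stream of rows $x_1, x_2, \ldots$, each row being an item label. For any item $x$ and any time $t$, the estimate $\hat{N}_x(t)$ is an unbiased estimate of the true count $n_x(t)$, i.e. $\mathbb{E}\,\hat{N}_x(t) = n_x(t)$.
   Context: Unbiased Space Saving sketch with $m$ bins: maintain a list of $m$ (item, count) pairs, all counts initialized to $0$ (initially unlabeled). For each new row with item $x_{new}$: if $x_{new}$ is the label of some pair, increment that pair's count by $1$. Otherwise, find the pair $(x_{min}, \hat{N}_{min})$ with the smallest count, increment its count by $1$, and with probability $1/(\hat{N}_{min}+1)$ (independently of everything else) replace its label by $x_{new}$. After $t$ rows, $\hat{N}_x(t)$ is the count of the pair labeled $x$ if $x$ is a label, and $0$ otherwise; $n_x(t)$ is the number of occurrences of $x$ among the first $t$ rows. *)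

theory Defs
  imports "HOL-Probability.Probability"
begin

text \<open>A sketch state is a list of m bins (label, count); an unlabeled bin has label None.\<close>
type_synonym 'a uss_state = "('a option \<times> nat) list"

definition valid_min_selector :: "nat \<Rightarrow> ('a uss_state \<Rightarrow> nat) \<Rightarrow> bool" where
  "valid_min_selector m sel \<longleftrightarrow>
     (\<forall>s. length s = m \<longrightarrow> sel s < m \<and> (\<forall>j<m. snd (s ! sel s) \<le> snd (s ! j)))"

definition uss_step :: "('a uss_state \<Rightarrow> nat) \<Rightarrow> 'a uss_state \<Rightarrow> 'a \<Rightarrow> 'a uss_state pmf" where
  "uss_step sel s x =
     (case find (\<lambda>i. fst (s ! i) = Some x) [0..<length s] of
        Some i \<Rightarrow> return_pmf (s[i := (Some x, snd (s ! i) + 1)])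
      | None \<Rightarrow>
          (let i = sel s; c = snd (s ! i) in
             map_pmf (\<lambda>b. s[i := (if b then Some x else fst (s ! i), c + 1)])
                     (bernoulli_pmf (1 / real (c + 1)))))"

definition uss_run :: "nat \<Rightarrow> ('a uss_state \<Rightarrow> nat) \<Rightarrow> (nat \<Rightarrow> 'a) \<Rightarrow> nat \<Rightarrow> 'a uss_state pmf" where
  "uss_run m sel xs t =
     foldl (\<lambda>p x. p \<bind> (\<lambda>s. uss_step sel s x))
           (return_pmf (replicate m (None, 0))) (map xs [0..<t])"

definition uss_estimate :: "'a uss_state \<Rightarrow> 'a \<Rightarrow> nat" where
  "uss_estimate s x = (case find (\<lambda>p. fst p = Some x) s of Some p \<Rightarrow> snd p | None \<Rightarrow> 0)"

definition true_count :: "(nat \<Rightarrow> 'a) \<Rightarrow> 'a \<Rightarrow> nat \<Rightarrow> nat" where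
  "true_count xs x t = card {i. i < t \<and> xs i = x}"

end

theory Submission
  imports Defs
begin

lemma exp_bind_nonneg:
  fixes f :: "'b \<Rightarrow> real"
  assumes fM: "finite (set_pmf M)" and fN: "\<And>x. x \<in> set_pmf M \<Longrightarrow> finite (set_pmf (N x))"
    and nn: "\<And>y. 0 \<le> f y"
  shows "measure_pmf.expectation (M \<bind> N) f = measure_pmf.expectation M (\<lambda>x. measure_pmf.expectation (N x) f)"
proof -
  have fin: "finite (set_pmf (M \<bind> N))" using fM fN by simp
  have "ennreal (measure_pmf.expectation (M \<bind> N) f) = (\<integral>\<^sup>+ y. ennreal (f y) \<partial>measure_pmf (bind_pmf M N))"
    by (rule nn_integral_eq_integral[symmetric]) (auto intro: integrable_measure_pmf_finite[OF fin] simp: nn)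
  also have "\<dots> = (\<integral>\<^sup>+ x. \<integral>\<^sup>+ y. ennreal (f y) \<partial>N x \<partial>M)" by simp
  also have "\<dots> = (\<integral>\<^sup>+ x. ennreal (measure_pmf.expectation (N x) f) \<partial>M)"
  proof (rule nn_integral_cong_AE, rule AE_pmfI)
    fix x assume "x \<in> set_pmf M"
    then show "(\<integral>\<^sup>+ y. ennreal (f y) \<partial>N x) = ennreal (measure_pmf.expectation (N x) f)"
      by (intro nn_integral_eq_integral) (auto intro: integrable_measure_pmf_finite fN simp: nn)
  qed
  also have "\<dots> = ennreal (measure_pmf.expectation M (\<lambda>x. measure_pmf.expectation (N x) f))"
    by (intro nn_integral_eq_integral) (auto intro: integrable_measure_pmf_finite fM integral_nonneg_AE simp: nn)
  finally show ?thesis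
    by (subst (asm) ennreal_inj) (auto intro!: integral_nonneg_AE simp: nn)
qed

definition dl :: "'a uss_state \<Rightarrow> bool" where
  "dl s \<longleftrightarrow> (\<forall>i j y. i < length s \<longrightarrow> j < length s \<longrightarrow> fst (s!i) = Some y \<longrightarrow> fst (s!j) = Some y \<longrightarrow> i = j)"

lemma dlD: "dl s \<Longrightarrow> i < length s \<Longrightarrow> j < length s \<Longrightarrow> fst (s!i) = Some y \<Longrightarrow> fst (s!j) = Some y \<Longrightarrow> i = j"
  unfolding dl_def by blast

lemma fst_upd: "k < length s \<Longrightarrow> fst (s[i := v] ! k) = (if k = i then fst v else fst (s ! k))"
  by (simp add: nth_list_update)
lemma est_char:
  assumes "dl s" "i < length s" "fst (s!i) = Some x"
  shows "uss_estimate s x = snd (s!i)"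
proof -
  obtain k where k: "k < length s" "fst (s!k) = Some x" "\<forall>j<k. fst (s!j) \<noteq> Some x"
    using assms(2,3) exists_least_iff[of "\<lambda>k. k < length s \<and> fst (s!k) = Some x"]
    by (metis (no_types, lifting) order.strict_trans)
  have "find (\<lambda>p. fst p = Some x) s = Some (s!k)"
    using k by (auto simp: find_Some_iff)
  moreover have "k = i" using dlD[OF assms(1) k(1) assms(2) k(2) assms(3)] .
  ultimately show ?thesis by (simp add: uss_estimate_def)
qed

lemma est_none:
  assumes "\<forall>i<length s. fst (s!i) \<noteq> Some x"
  shows "uss_estimate s x = 0"
proof -
  have "find (\<lambda>p. fst p = Some x) s = None"
    using assms by (auto simp: find_None_iff in_set_conv_nth)
  then show ?thesis by (simp add: uss_estimate_def)
qed

lemma upd_est: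
  assumes d: "dl s" and i: "i < length s" and d': "dl (s[i := (l, c)])"
  shows "uss_estimate (s[i := (l, c)]) x =
     (if l = Some x then c else if fst (s!i) = Some x then 0 else uss_estimate s x)"
proof (cases "l = Some x")
  case True
  then show ?thesis using est_char[OF d', of i x] i by simp
next
  case False
  note F = False
  show ?thesis
  proof (cases "fst (s!i) = Some x")
    case True
    have "\<forall>j<length (s[i := (l, c)]). fst (s[i := (l, c)] ! j) \<noteq> Some x"
    proof (intro allI impI)
      fix j assume j: "j < length (s[i := (l, c)])"
      show "fst (s[i := (l, c)] ! j) \<noteq> Some x"
      proof (cases "j = i")
        case True then show ?thesis using F i by simp
      next
        case False
        have "j < length s" using j by simp
        then have "fst (s!j) \<noteq> Some x" using dlD[OF d _ i _ True, of j] False by blast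
        then show ?thesis using False by simp
      qed
    qed
    then have "uss_estimate (s[i := (l, c)]) x = 0" by (rule est_none)
    then show ?thesis using F True by simp
  next
    case False
    show ?thesis
    proof (cases "\<exists>j<length s. fst (s!j) = Some x")
      case True
      then obtain j where j: "j < length s" "fst (s!j) = Some x" by blast
      with False have "j \<noteq> i" by auto
      then show ?thesis using est_char[OF d j] est_char[OF d', of j x] j F False by simp
    next
      case nf: False
      have "\<forall>j<length (s[i := (l, c)]). fst (s[i := (l, c)] ! j) \<noteq> Some x"
        using nf F by (auto simp: fst_upd)
      then have "uss_estimate (s[i := (l, c)]) x = 0" by (rule est_none)
      moreover have "uss_estimate s x = 0" using nf by (intro est_none) auto
      ultimately show ?thesis using F False by simp
    qed
  qed
qed

lemma dl_upd_same:
  assumes "dl s" "i < length s" shows "dl (s[i := (fst (s!i), c)])"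
  unfolding dl_def
proof (intro allI impI)
  fix a b z assume "a < length (s[i := (fst (s!i), c)])" "b < length (s[i := (fst (s!i), c)])"
    "fst (s[i := (fst (s!i), c)] ! a) = Some z" "fst (s[i := (fst (s!i), c)] ! b) = Some z"
  then have "a < length s" "b < length s" "fst (s ! a) = Some z" "fst (s ! b) = Some z"
    by (simp_all add: fst_upd split: if_splits)
  then show "a = b" using dlD[OF assms(1)] by blast
qed

lemma dl_upd_new:
  assumes "dl s" "i < length s" "\<forall>j<length s. fst (s!j) \<noteq> Some y"
  shows "dl (s[i := (Some y, c)])"
  unfolding dl_def
proof (intro allI impI)
  fix a b z assume "a < length (s[i := (Some y, c)])" "b < length (s[i := (Some y, c)])"
    and h: "fst (s[i := (Some y, c)] ! a) = Some z" "fst (s[i := (Some y, c)] ! b) = Some z"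
  then have ab: "a < length s" "b < length s" by simp_all
  show "a = b"
  proof (cases "a = i \<or> b = i")
    case True
    then show ?thesis using h ab assms(3) by (auto simp: fst_upd split: if_splits)
  next
    case False
    then have "fst (s ! a) = Some z" "fst (s ! b) = Some z" using h ab by (simp_all add: fst_upd)
    then show ?thesis using dlD[OF assms(1)] ab by blast
  qed
qed

lemma step_props:
  assumes vs: "valid_min_selector m sel" and m: "m \<ge> 1" and len: "length s = m" and d: "dl s"
  shows "finite (set_pmf (uss_step sel s y))"
    and "\<forall>s' \<in> set_pmf (uss_step sel s y). length s' = m \<and> dl s'"
    and "measure_pmf.expectation (uss_step sel s y) (\<lambda>s. real (uss_estimate s x))
           = real (uss_estimate s x) + (if y = x then 1 else 0)"
proof -
  have sel: "sel s < m" using vs len unfolding valid_min_selector_def by blast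
  have "finite (set_pmf (uss_step sel s y)) \<and>
       (\<forall>s' \<in> set_pmf (uss_step sel s y). length s' = m \<and> dl s') \<and>
       measure_pmf.expectation (uss_step sel s y) (\<lambda>s. real (uss_estimate s x))
           = real (uss_estimate s x) + (if y = x then 1 else 0)"
  proof (cases "find (\<lambda>i. fst (s ! i) = Some y) [0..<length s]")
    case (Some i)
    then have i: "i < length s" "fst (s!i) = Some y" by (auto simp: find_Some_iff)
    have d': "dl (s[i := (Some y, snd (s ! i) + 1)])"
      using dl_upd_same[OF d i(1)] i by simp
    have e: "uss_estimate (s[i := (Some y, snd (s ! i) + 1)]) x = uss_estimate s x + (if y = x then 1 else 0)"
      using upd_est[OF d i(1) d'] est_char[OF d i(1)] i by auto
    show ?thesis using Some d' e len unfolding uss_step_def by simp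
  next
    case None
    then have nf: "\<forall>j<length s. fst (s!j) \<noteq> Some y" by (auto simp: find_None_iff)
    define i where "i = sel s"
    define c where "c = snd (s ! i)"
    have i: "i < length s" using sel len i_def by simp
    have st: "uss_step sel s y = map_pmf (\<lambda>b. s[i := (if b then Some y else fst (s ! i), c + 1)])
                     (bernoulli_pmf (1 / real (c + 1)))"
      using None unfolding uss_step_def i_def c_def Let_def by simp
    have dT: "dl (s[i := (Some y, c + 1)])" using dl_upd_new[OF d i nf] .
    have dF: "dl (s[i := (fst (s!i), c + 1)])" using dl_upd_same[OF d i] .
    have p: "0 \<le> 1 / real (c + 1)" "1 / real (c + 1) \<le> 1" by auto
    have fin: "finite (set_pmf (uss_step sel s y))"
      unfolding st by simp
    have inv: "\<forall>s' \<in> set_pmf (uss_step sel s y). length s' = m \<and> dl s'"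
      unfolding st using dT dF len by auto
    have eT: "uss_estimate (s[i := (Some y, c + 1)]) x =
       (if y = x then c + 1 else if fst (s!i) = Some x then 0 else uss_estimate s x)"
      using upd_est[OF d i dT] by simp
    have eF: "uss_estimate (s[i := (fst (s!i), c + 1)]) x =
       (if fst (s!i) = Some x then c + 1 else uss_estimate s x)"
      using upd_est[OF d i dF] by simp
    have E: "measure_pmf.expectation (uss_step sel s y) (\<lambda>s. real (uss_estimate s x)) =
       real (uss_estimate (s[i := (Some y, c + 1)]) x) * (1 / real (c + 1))
       + real (uss_estimate (s[i := (fst (s!i), c + 1)]) x) * (1 - 1 / real (c + 1))"
      unfolding st using p by (simp del: of_nat_Suc)
    have cpos: "real (c + 1) > 0" by simp
    have "measure_pmf.expectation (uss_step sel s y) (\<lambda>s. real (uss_estimate s x))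
           = real (uss_estimate s x) + (if y = x then 1 else 0)"
    proof (cases "y = x")
      case True
      have z: "uss_estimate s x = 0" using est_none[of s x] nf True by simp
      have ne: "fst (s!i) \<noteq> Some x" using nf True i by auto
      have a1: "uss_estimate (s[i := (Some y, c + 1)]) x = c + 1" using eT True by simp
      have a2: "uss_estimate (s[i := (fst (s!i), c + 1)]) x = 0" using eF ne z by simp
      have "real (c + 1) * (1 / real (c + 1)) = 1" using cpos by simp
      then show ?thesis unfolding E a1 a2 z using True by simp
    next
      case False
      show ?thesis
      proof (cases "fst (s!i) = Some x")
        case True
        have z: "uss_estimate s x = c" using est_char[OF d i True] c_def by simp
        have a1: "uss_estimate (s[i := (Some y, c + 1)]) x = 0" using eT True False by simp
        have a2: "uss_estimate (s[i := (fst (s!i), c + 1)]) x = c + 1" using eF True by simp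
        have "real (c + 1) * (1 - 1 / real (c + 1)) = real c" using cpos by (simp add: field_simps)
        then show ?thesis unfolding E a1 a2 z using False by simp
      next
        case F2: False
        have a1: "uss_estimate (s[i := (Some y, c + 1)]) x = uss_estimate s x" using eT F2 False by simp
        have a2: "uss_estimate (s[i := (fst (s!i), c + 1)]) x = uss_estimate s x" using eF F2 by simp
        have "\<And>e::real. e * (1 / real (c + 1)) + e * (1 - 1 / real (c + 1)) = e"
          by (simp add: right_diff_distrib)
        then show ?thesis unfolding E a1 a2 using False by simp
      qed
    qed
    with fin inv show ?thesis by blast
  qed
  then show "finite (set_pmf (uss_step sel s y))"
    and "\<forall>s' \<in> set_pmf (uss_step sel s y). length s' = m \<and> dl s'"
    and "measure_pmf.expectation (uss_step sel s y) (\<lambda>s. real (uss_estimate s x))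
           = real (uss_estimate s x) + (if y = x then 1 else 0)" by blast+
qed

lemma run_Suc: "uss_run m sel xs (Suc t) = uss_run m sel xs t \<bind> (\<lambda>s. uss_step sel s (xs t))"
  unfolding uss_run_def by simp

lemma true_count_Suc: "true_count xs x (Suc t) = true_count xs x t + (if xs t = x then 1 else 0)"
proof (cases "xs t = x")
  case True
  then have "{i. i < Suc t \<and> xs i = x} = insert t {i. i < t \<and> xs i = x}" by (auto simp: less_Suc_eq)
  then show ?thesis using True unfolding true_count_def by simp
next
  case False
  then have "{i. i < Suc t \<and> xs i = x} = {i. i < t \<and> xs i = x}" by (auto simp: less_Suc_eq)
  then show ?thesis using False unfolding true_count_def by simp
qed

lemma run_props:
  assumes vs: "valid_min_selector m sel" and m: "m \<ge> 1"
  shows "finite (set_pmf (uss_run m sel xs t)) \<and>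
    (\<forall>s \<in> set_pmf (uss_run m sel xs t). length s = m \<and> dl s) \<and>
    measure_pmf.expectation (uss_run m sel xs t) (\<lambda>s. real (uss_estimate s x)) = real (true_count xs x t)"
proof (induction t)
  case 0
  have "uss_estimate (replicate m (None, 0)) x = 0" by (rule est_none) simp
  moreover have "dl (replicate m (None :: 'a option, 0::nat))" unfolding dl_def by simp
  ultimately show ?case by (simp add: uss_run_def true_count_def)
next
  case (Suc t)
  let ?M = "uss_run m sel xs t"
  from Suc.IH have fM: "finite (set_pmf ?M)" and inv: "\<forall>s \<in> set_pmf ?M. length s = m \<and> dl s"
    and E: "measure_pmf.expectation ?M (\<lambda>s. real (uss_estimate s x)) = real (true_count xs x t)" by auto
  have fN: "\<And>s. s \<in> set_pmf ?M \<Longrightarrow> finite (set_pmf (uss_step sel s (xs t)))"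
    using step_props(1)[OF vs m] inv by blast
  have fin: "finite (set_pmf (uss_run m sel xs (Suc t)))" unfolding run_Suc using fM fN by simp
  have inv': "\<forall>s \<in> set_pmf (uss_run m sel xs (Suc t)). length s = m \<and> dl s"
    unfolding run_Suc using step_props(2)[OF vs m] inv by auto
  have "measure_pmf.expectation (uss_run m sel xs (Suc t)) (\<lambda>s. real (uss_estimate s x))
      = measure_pmf.expectation ?M (\<lambda>s. measure_pmf.expectation (uss_step sel s (xs t)) (\<lambda>s. real (uss_estimate s x)))"
    unfolding run_Suc by (rule exp_bind_nonneg[OF fM fN]) simp_all
  also have "\<dots> = measure_pmf.expectation ?M (\<lambda>s. real (uss_estimate s x) + (if xs t = x then 1 else 0))"
    by (rule integral_cong_AE) (auto intro!: AE_pmfI simp: step_props(3)[OF vs m] inv)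
  also have "\<dots> = real (true_count xs x t) + (if xs t = x then 1 else 0)"
    using E by (subst Bochner_Integration.integral_add) (auto intro: integrable_measure_pmf_finite fM)
  finally show ?case using fin inv' by (simp add: true_count_Suc)
qed

theorem theorem1:
  fixes m :: nat and sel :: "'a uss_state \<Rightarrow> nat" and xs :: "nat \<Rightarrow> 'a" and x :: 'a and t :: nat
  assumes "m \<ge> 1" and "valid_min_selector m sel"
  shows "measure_pmf.expectation (uss_run m sel xs t) (\<lambda>s. real (uss_estimate s x))
           = real (true_count xs x t)"
  using run_props[OF assms(2,1)] by blast

end
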